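(* Let $n\ge2$ be an integer and $f(u,\bar u)=u^n+u+\bar u$. Then $0$ is an isolated root of $f$ and \[ \operatorname{sm}(f,0)=\begin{cases}1,& n \text{ even},\\ -1,& n\equiv3\pmod 4,\\ 1,& n\equiv1\pmod 4.\end{cases} \]
   Context: For a mixed polynomial $h(u,\bar u)$ in one complex variable with isolated root $\alpha$, the multiplicity with sign $\operatorname{sm}(h,\alpha)$ is the mapping degree of $h/|h|:\{|u-\alpha|=\varepsilon\}\to S^1$ for small $\varepsilon>0$, the circle oriented counterclockwise. *)

theory Defs
  imports "HOL-Complex_Analysis.Complex_Analysis"
begin

text \<open>A function of one complex variable (a mixed polynomial h(u, conj u) is rendered as
  a function complex \<Rightarrow> complex) has an isolated root at alpha.\<close>
definition isolated_root :: "(complex \<Rightarrow> complex) \<Rightarrow> complex \<Rightarrow> bool" where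
  "isolated_root h \<alpha> \<longleftrightarrow> h \<alpha> = 0 \<and>
     (\<exists>e>0. \<forall>u. 0 < cmod (u - \<alpha>) \<and> cmod (u - \<alpha>) < e \<longrightarrow> h u \<noteq> 0)"

text \<open>Mapping degree of h/|h| restricted to the counterclockwise circle of radius e about
  alpha, i.e. the winding number about 0 of the loop (h/|h|) o circlepath alpha e in S^1.\<close>
definition circle_degree :: "(complex \<Rightarrow> complex) \<Rightarrow> complex \<Rightarrow> real \<Rightarrow> complex" where
  "circle_degree h \<alpha> e =
     winding_number ((\<lambda>u. h u / complex_of_real (cmod (h u))) \<circ> circlepath \<alpha> e) 0"

definition sm :: "(complex \<Rightarrow> complex) \<Rightarrow> complex \<Rightarrow> int" where
  "sm h \<alpha> = (THE d. \<forall>\<^sub>F e in at_right 0. circle_degree h \<alpha> e = of_int d)"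

end

theory Submission
  imports Defs
begin

lemma crit_seg:
  fixes a b :: complex
  assumes "b \<noteq> 0"
    and c: "Re a * Re b > 0 \<or> Im a * Im b > 0 \<or> (a \<noteq> 0 \<and> Re a * Re b \<ge> 0 \<and> Im a * Im b \<ge> 0)"
  shows "0 \<notin> closed_segment a b"
proof
  assume "0 \<in> closed_segment a b"
  then obtain s where s: "0 \<le> s" "s \<le> 1" and e: "(1 - s) *\<^sub>R a + s *\<^sub>R b = 0"
    unfolding closed_segment_def by auto
  have r: "(1 - s) * Re a + s * Re b = 0" using arg_cong[OF e, of Re] by simp
  have i: "(1 - s) * Im a + s * Im b = 0" using arg_cong[OF e, of Im] by simp
  have r2: "(1 - s) * (Re a * Re b) + s * (Re b)^2 = 0" using arg_cong[OF r, of "\<lambda>z. z * Re b"]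
    by (simp add: algebra_simps power2_eq_square)
  have i2: "(1 - s) * (Im a * Im b) + s * (Im b)^2 = 0" using arg_cong[OF i, of "\<lambda>z. z * Im b"]
    by (simp add: algebra_simps power2_eq_square)
  have r3: "(1 - s) * (Re a)^2 + s * (Re a * Re b) = 0" using arg_cong[OF r, of "\<lambda>z. z * Re a"]
    by (simp add: algebra_simps power2_eq_square)
  have i3: "(1 - s) * (Im a)^2 + s * (Im a * Im b) = 0" using arg_cong[OF i, of "\<lambda>z. z * Im a"]
    by (simp add: algebra_simps power2_eq_square)
  have bb: "(Re b)^2 + (Im b)^2 > 0" using assms(1) by (simp flip: cmod_power2)
  show False
  proof -
    consider "Re a * Re b > 0" | "Im a * Im b > 0" | "a \<noteq> 0" "Re a * Re b \<ge> 0" "Im a * Im b \<ge> 0"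
      using c by blast
    then show False
    proof cases
      case 1
      have t1: "(1-s)*(Re a*Re b) \<ge> 0" using 1 s by simp
      have t2: "s*(Re b)^2 \<ge> 0" using s by simp
      have "(1-s)*(Re a*Re b) = 0" "s*(Re b)^2 = 0" using r2 t1 t2 by linarith+
      then have "s = 1" "(Re b)^2 = 0" using 1 by auto
      then show ?thesis using 1 by simp
    next
      case 2
      have t1: "(1-s)*(Im a*Im b) \<ge> 0" using 2 s by simp
      have t2: "s*(Im b)^2 \<ge> 0" using s by simp
      have "(1-s)*(Im a*Im b) = 0" "s*(Im b)^2 = 0" using i2 t1 t2 by linarith+
      then have "s = 1" "(Im b)^2 = 0" using 2 by auto
      then show ?thesis using 2 by simp
    next
      case 3
      have aa: "(Re a)^2 + (Im a)^2 > 0" using 3(1) by (simp flip: cmod_power2)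
      have t1: "(1-s)*(Re a*Re b) \<ge> 0" "(1-s)*(Im a*Im b) \<ge> 0" using 3 s by simp_all
      have t2: "s*(Re b)^2 \<ge> 0" "s*(Im b)^2 \<ge> 0" using s by simp_all
      have "s * ((Re b)^2 + (Im b)^2) = 0" using r2 i2 t1 t2 by (simp add: algebra_simps)
      hence "s = 0" using bb by (metis mult_eq_0_iff less_irrefl)
      then show ?thesis using r3 i3 aa by simp
    qed
  qed
qed

lemma ipow: "\<i>^n = (if n mod 4 = 0 then 1 else if n mod 4 = 1 then \<i> else if n mod 4 = 2 then -1 else -\<i>)"
proof -
  have "n = 4 * (n div 4) + n mod 4" by simp
  then have "\<i>^n = (\<i>^4)^(n div 4) * \<i>^(n mod 4)"
    by (metis power_add power_mult)
  also have "\<dots> = \<i>^(n mod 4)" by simp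
  moreover have "n mod 4 = 0 \<or> n mod 4 = 1 \<or> n mod 4 = 2 \<or> n mod 4 = 3" by arith
  ultimately show ?thesis
    by (auto simp: power2_eq_square power3_eq_cube)
qed

lemma pow_approx:
  fixes v :: complex
  assumes "norm v = 1"
  shows "norm (v^n - (\<i> * of_real (Im v))^n) \<le> n * \<bar>Re v\<bar>"
proof -
  have "norm (\<i> * of_real (Im v)) \<le> 1" using assms abs_Im_le_cmod[of v] by (simp add: norm_mult)
  then have "norm (v^n - (\<i> * of_real (Im v))^n) \<le> n * norm (v - \<i> * of_real (Im v))"
    using assms by (intro norm_power_diff) auto
  also have "v - \<i> * of_real (Im v) = of_real (Re v)" by (simp add: complex_eq_iff)
  finally show ?thesis by simp
qed

lemma q_big:
  fixes v :: complex
  assumes "norm v = 1" "\<bar>Re v\<bar> \<le> 1/2"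
  shows "\<bar>Im v\<bar> \<ge> 1/2"
proof -
  have "(Re v)^2 + (Im v)^2 = 1" using assms(1) by (simp add: cmod_def)
  moreover have "(Re v)^2 \<le> (1/2)^2" using assms(2)
    by (metis power2_abs power_mono abs_ge_zero)
  ultimately have "(Im v)^2 \<ge> (1/2)^2" by (simp add: power2_eq_square)
  show ?thesis
  proof (rule ccontr)
    assume "\<not> ?thesis"
    then have "\<bar>Im v\<bar>^2 < (1/2)^2" by (intro power_strict_mono) auto
    then show False using \<open>(Im v)^2 \<ge> (1/2)^2\<close> by simp
  qed
qed

lemma AB_bound:
  fixes A B C :: complex
  assumes "norm A = 1" "norm B = 1" "norm C = 1" "norm (A - C) \<le> d" "norm (B - C) \<le> d"
  shows "norm (B^j * A^i - C^(j+i)) \<le> (j+i) * d"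
proof -
  have "B^j * A^i - C^(j+i) = (B^j - C^j) * A^i + C^j * (A^i - C^i)"
    by (simp add: algebra_simps power_add)
  then have "norm (B^j * A^i - C^(j+i)) \<le> norm (B^j - C^j) * norm (A^i) + norm (C^j) * norm (A^i - C^i)"
    by (metis norm_mult norm_triangle_ineq)
  also have "\<dots> = norm (B^j - C^j) + norm (A^i - C^i)" using assms by (simp add: norm_power)
  also have "\<dots> \<le> j * norm (B - C) + i * norm (A - C)"
    using assms by (intro add_mono norm_power_diff) auto
  also have "\<dots> \<le> j * d + i * d" using assms by (intro add_mono mult_left_mono) auto
  finally show ?thesis by (simp add: algebra_simps)
qed


lemma key_v:
  fixes v :: complex and \<epsilon> :: real and n :: nat
  assumes n: "n \<ge> 2" and v: "norm v = 1" and \<epsilon>: "0 < \<epsilon>" "\<epsilon> * (n * 2^(n+1)) \<le> 1"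
  defines "F \<equiv> complex_of_real (2 * Re v) + complex_of_real \<epsilon> * v^n"
    and "G \<equiv> (if n mod 4 = 3 then cnj v else v)"
  shows "Re F * Re G > 0 \<or> Im F * Im G > 0 \<or> (F \<noteq> 0 \<and> Re F * Re G \<ge> 0 \<and> Im F * Im G \<ge> 0)"
proof -
  define p where "p = Re v"
  define q where "q = Im v"
  have ReF: "Re F = 2 * p + \<epsilon> * Re (v^n)" by (simp add: F_def p_def)
  have ImF: "Im F = \<epsilon> * Im (v^n)" by (simp add: F_def)
  have ReG: "Re G = p" by (simp add: G_def p_def)
  have ImG: "Im G = (if n mod 4 = 3 then - q else q)" by (simp add: G_def q_def)
  have nvn: "norm (v^n) = 1" using v by (simp add: norm_power)
  have Rvn: "\<bar>Re (v^n)\<bar> \<le> 1" using abs_Re_le_cmod[of "v^n"] nvn by simp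
  have "(2::real)^3 \<le> 2^(n+1)" using n by (intro power_increasing) auto
  then have p8: "(8::real) \<le> 2^(n+1)" by simp
  have "real n * 2^(n+1) \<ge> 2 * 8" using n p8 by (intro mult_mono) auto
  then have big: "real n * 2^(n+1) \<ge> 16" by simp
  have ne8: "real n * \<epsilon> * 8 \<le> real n * \<epsilon> * 2^(n+1)" using p8 \<epsilon>(1) by (intro mult_left_mono) auto
  then have ne: "real n * \<epsilon> \<le> 1/8" using \<epsilon>(2) by (simp add: algebra_simps)
  show ?thesis
  proof (cases "\<bar>p\<bar> \<ge> \<epsilon>")
    case True
    have "\<epsilon> * \<bar>p\<bar> \<le> p^2" using True \<epsilon>(1)
      by (metis abs_ge_zero mult_right_mono power2_abs power2_eq_square)
    moreover have "\<bar>\<epsilon> * p * Re (v^n)\<bar> \<le> \<epsilon> * \<bar>p\<bar>"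
      using Rvn \<epsilon>(1) by (simp add: abs_mult mult_left_le)
    moreover have "p^2 > 0" using True \<epsilon>(1) by simp
    ultimately have "Re F * Re G > 0" unfolding ReF ReG
      by (simp add: algebra_simps power2_eq_square)
    then show ?thesis by simp
  next
    case False
    then have pe: "\<bar>p\<bar> < \<epsilon>" by simp
    have "\<epsilon> * 16 \<le> \<epsilon> * (real n * 2^(n+1))" using big \<epsilon>(1) by (intro mult_left_mono) auto
    then have e16: "\<epsilon> \<le> 1/16" using \<epsilon>(2) by simp
    have q2: "\<bar>q\<bar> \<ge> 1/2" unfolding q_def using q_big[OF v] pe e16 p_def by simp
    define D where "D = v^n - (\<i> * of_real q)^n"
    have nD: "norm D \<le> n * \<bar>p\<bar>" unfolding D_def p_def q_def using pow_approx[OF v] .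
    have "norm D * 2^(n+1) \<le> n * \<bar>p\<bar> * 2^(n+1)" using nD by simp
    also have "\<dots> < n * \<epsilon> * 2^(n+1)" using pe n by simp
    also have "\<dots> \<le> 1" using \<epsilon>(2) by (simp add: algebra_simps)
    finally have "norm D * 2 ^ n < 1/2" by simp
    then have nD2: "norm D < (1/2)^n" by (simp add: field_simps)
    have qn: "\<bar>q\<bar>^n \<ge> (1/2)^n" using q2 by (intro power_mono) auto
    have iq: "(\<i> * of_real q)^n = \<i>^n * of_real (q^n)" by (simp add: power_mult_distrib)
    have vn: "v^n = \<i>^n * of_real (q^n) + D" using iq D_def by simp
    show ?thesis
    proof (cases "odd n")
      case True
      have odd1: "even (n+1)" using True by simp
      have qq: "q * q^n = \<bar>q\<bar> * \<bar>q\<bar>^n" using power_even_abs[OF odd1, of q] by (simp add: power_abs)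
      have "\<bar>q * Im D\<bar> \<le> \<bar>q\<bar> * norm D" by (simp add: abs_mult abs_Im_le_cmod mult_left_mono)
      have pos: "\<bar>q\<bar> * \<bar>q\<bar>^n - \<bar>q\<bar> * norm D > 0" using q2 qn nD2
        by (simp add: right_diff_distrib[symmetric])
      have m13: "n mod 4 = 1 \<or> n mod 4 = 3" using True by presburger
      then show ?thesis
      proof
        assume m: "n mod 4 = 1"
        have "Im (v^n) = q^n + Im D" using vn ipow[of n] m by simp
        then have "Im F * Im G = \<epsilon> * (q * q^n + q * Im D)" using ImF ImG m by (simp add: algebra_simps)
        moreover have "q * q^n + q * Im D > 0" using qq pos \<open>\<bar>q * Im D\<bar> \<le> \<bar>q\<bar> * norm D\<close> by linarith
        ultimately show ?thesis using \<epsilon>(1) by simp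
      next
        assume m: "n mod 4 = 3"
        have e: "Im (v^n) = Im D - q^n" using vn ipow[of n] m by simp
        have "Im F * Im G = \<epsilon> * Im (v^n) * (- q)" using ImF ImG m by simp
        also have "\<dots> = \<epsilon> * (q * q^n - q * Im D)" unfolding e by (simp add: algebra_simps)
        finally have "Im F * Im G = \<epsilon> * (q * q^n - q * Im D)" .
        moreover have "q * q^n - q * Im D > 0" using qq pos \<open>\<bar>q * Im D\<bar> \<le> \<bar>q\<bar> * norm D\<close> by linarith
        ultimately show ?thesis using \<epsilon>(1) by simp
      qed
    next
      case False
      then obtain m where nm: "n = 2 * m" by blast
      have m1: "m \<ge> 1" using n nm by simp
      define \<tau> :: real where "\<tau> = (-1)^m"
      have tau2: "\<tau> * \<tau> = 1" by (simp add: \<tau>_def flip: power_add mult_2)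
      have in_: "\<i>^n = of_real \<tau>" by (simp add: nm power_mult \<tau>_def)
      have not3: "n mod 4 \<noteq> 3" using nm by presburger
      have qe: "q^n = \<bar>q\<bar>^n" using False by (simp add: power_even_abs)
      have "\<tau> * Re (v^n) = q^n + \<tau> * Re D" using vn in_ tau2 by (simp add: algebra_simps)
      moreover have "\<bar>\<tau> * Re D\<bar> \<le> norm D" using tau2 abs_Re_le_cmod[of D]
        by (simp add: \<tau>_def abs_mult power_abs)
      ultimately have tRe: "\<tau> * Re (v^n) > 0" using qe qn nD2 by linarith
      define A where "A = v^2"
      define B where "B = (cnj v)^2"
      define S where "S = (\<Sum>i<m. B^(m - Suc i) * A^i)"
      have h2: "A^m - B^m = (A - B) * S" unfolding S_def by (rule power_diff_sumr2)
      have h4: "A^m = v^n" "B^m = cnj (v^n)" by (simp_all add: A_def B_def nm power_mult)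
      have "A - B = (v - cnj v) * (v + cnj v)" by (simp add: A_def B_def power2_eq_square algebra_simps)
      also have "\<dots> = (complex_of_real (2 * q) * \<i>) * complex_of_real (2 * p)"
        by (simp only: complex_diff_cnj complex_add_cnj p_def q_def)
      finally have h3: "A - B = complex_of_real (4 * p * q) * \<i>" by (simp add: algebra_simps)
      have E: "complex_of_real (2 * Im (v^n)) * \<i> = complex_of_real (4 * p * q) * \<i> * S"
        using h2 h3 h4 complex_diff_cnj[of "v^n"] by simp
      have "complex_of_real (2 * Im (v^n)) = complex_of_real (4 * p * q) * S"
        using arg_cong[OF E, of "\<lambda>z. z * (- \<i>)"] by (simp add: algebra_simps)
      then have "Re (complex_of_real (2 * Im (v^n))) = Re (complex_of_real (4 * p * q) * S)" by simp
      then have ImS: "Im (v^n) = 2 * p * q * Re S" by simp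
      have vc: "v * cnj v = 1" using v complex_norm_square[of v] by simp
      have nA: "norm A = 1" "norm B = 1" using v by (simp_all add: A_def B_def norm_power)
      have "A + 1 = v * v + v * cnj v" using vc by (simp add: A_def power2_eq_square)
      also have "\<dots> = v * (v + cnj v)" by (simp add: algebra_simps)
      also have "\<dots> = v * complex_of_real (2 * p)" by (simp only: complex_add_cnj p_def)
      finally have "A + 1 = v * complex_of_real (2 * p)" .
      then have nA1: "norm (A - (-1)) = 2 * \<bar>p\<bar>" using v by (simp add: norm_mult)
      have "B + 1 = cnj (A + 1)" by (simp add: A_def B_def)
      then have nB1: "norm (B - (-1)) = 2 * \<bar>p\<bar>" using nA1 by (metis complex_mod_cnj diff_minus_eq_add)
      have mp: "real (m - 1) * (2 * \<bar>p\<bar>) < 1"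
      proof -
        have "real (m - 1) * (2 * \<bar>p\<bar>) \<le> real n * \<bar>p\<bar>" using nm m1 by (simp add: of_nat_diff mult_right_mono)
        also have "\<dots> \<le> real n * \<epsilon>" using pe by (intro mult_left_mono) auto
        also have "\<dots> \<le> 1/8" using ne .
        finally show ?thesis by simp
      qed
      have cm: "- \<tau> * (-1)^(m-1) = 1"
      proof -
        have "(-1::real)^m = (-1) * (-1)^(m-1)" using m1
          by (metis Suc_diff_1 less_le_trans power_Suc zero_less_one)
        then show ?thesis by (simp add: \<tau>_def flip: power_add mult_2)
      qed
      have trm: "Re (complex_of_real (- \<tau>) * (B^(m - Suc i) * A^i)) > 0" if "i < m" for i
      proof -
        have ji: "m - Suc i + i = m - 1" using that by simp
        have rji: "real (m - Suc i) + real i = real (m - 1)" using ji by (metis of_nat_add)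
        have bnd: "norm (B^(m - Suc i) * A^i - (-1)^(m-1)) \<le> real (m - 1) * (2 * \<bar>p\<bar>)"
          using AB_bound[OF nA(1) nA(2) _ order_refl, of "-1" "m - Suc i" i] nA1 nB1 ji rji by simp
        define T where "T = B^(m - Suc i) * A^i"
        have "Re (complex_of_real (- \<tau>) * T) = - \<tau> * (-1)^(m-1) + (- \<tau>) * Re (T - (-1)^(m-1))"
          by (simp add: algebra_simps)
        moreover have "\<bar>(- \<tau>) * Re (T - (-1)^(m-1))\<bar> \<le> norm (T - (-1)^(m-1))"
          using abs_Re_le_cmod[of "T - (-1)^(m-1)"] by (simp add: \<tau>_def abs_mult power_abs)
        moreover have "norm (T - (-1)^(m-1)) \<le> real (m - 1) * (2 * \<bar>p\<bar>)" using bnd T_def by simp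
        ultimately have "Re (complex_of_real (- \<tau>) * T) > 0" using cm mp by linarith
        then show ?thesis using T_def by simp
      qed
      have "Re (complex_of_real (- \<tau>) * S) = (\<Sum>i<m. Re (complex_of_real (- \<tau>) * (B^(m - Suc i) * A^i)))"
        by (simp add: S_def sum_distrib_left)
      also have "\<dots> > 0" using m1 by (intro sum_pos trm) (auto simp: lessThan_empty_iff)
      finally have tS: "\<tau> * Re S < 0" by simp
      have tz: "\<tau> \<noteq> 0" using tau2 by auto
      consider "p = 0" | "\<tau> * p > 0" | "\<tau> * p < 0" using tz by (metis linorder_neqE_linordered_idom mult_eq_0_iff)
      then show ?thesis
      proof cases
        case 1
        have "Re F \<noteq> 0" using ReF 1 tRe \<epsilon>(1) by auto
        then have "F \<noteq> 0" by auto
        moreover have "Im F = 0" using ImF ImS 1 by simp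
        ultimately show ?thesis using ReG 1 by simp
      next
        case 2
        have "p * Re (v^n) = (\<tau> * p) * (\<tau> * Re (v^n))" using tau2 by (simp add: algebra_simps)
        also have "\<dots> > 0" using 2 tRe by simp
        finally have a1: "\<epsilon> * (p * Re (v^n)) > 0" using \<epsilon>(1) by simp
        have a2: "Re F * Re G = 2 * p^2 + \<epsilon> * (p * Re (v^n))"
          using ReF ReG by (simp add: algebra_simps power2_eq_square)
        have a3: "p^2 > 0" using 2 by auto
        have "Re F * Re G > 0" using a1 a2 a3 by linarith
        then show ?thesis by simp
      next
        case 3
        have "Im F * Im G = \<epsilon> * (2 * q^2) * ((\<tau> * p) * (\<tau> * Re S))"
          using ImF ImG ImS not3 tau2 by (simp add: algebra_simps power2_eq_square)
        moreover have "q^2 > 0" using q2 by simp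
        moreover have "(\<tau> * p) * (\<tau> * Re S) > 0" using 3 tS by (simp add: mult_neg_neg)
        ultimately show ?thesis using \<epsilon>(1) by simp
      qed
    qed
  qed
qed


definition crit :: "complex \<Rightarrow> complex \<Rightarrow> bool" where
  "crit a b \<longleftrightarrow> Re a * Re b > 0 \<or> Im a * Im b > 0 \<or> (a \<noteq> 0 \<and> Re a * Re b \<ge> 0 \<and> Im a * Im b \<ge> 0)"

lemma crit_nz: "crit a b \<Longrightarrow> a \<noteq> 0"
  unfolding crit_def by auto

lemma crit_scale:
  assumes "crit a b" "0 < c" "0 < d"
  shows "crit (complex_of_real c * a) (complex_of_real d * b)"
proof -
  have cd: "c * d > 0" using assms by simp
  have r: "Re (complex_of_real c * a) * Re (complex_of_real d * b) = (c * d) * (Re a * Re b)" by simp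
  have i: "Im (complex_of_real c * a) * Im (complex_of_real d * b) = (c * d) * (Im a * Im b)" by simp
  have nz: "a \<noteq> 0 \<Longrightarrow> complex_of_real c * a \<noteq> 0" using assms by simp
  consider "Re a * Re b > 0" | "Im a * Im b > 0" | "a \<noteq> 0" "Re a * Re b \<ge> 0" "Im a * Im b \<ge> 0"
    using assms(1) unfolding crit_def by blast
  then show ?thesis
  proof cases
    case 1
    have X: "0 < (c*d)*(Re a*Re b)" by (rule mult_pos_pos[OF cd 1])
    show ?thesis unfolding crit_def r i using X by blast
  next
    case 2
    have X: "0 < (c*d)*(Im a*Im b)" by (rule mult_pos_pos[OF cd 2])
    show ?thesis unfolding crit_def r i using X by blast
  next
    case 3
    have X: "0 \<le> (c*d)*(Re a*Re b)" "0 \<le> (c*d)*(Im a*Im b)"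
      using cd 3 by (simp_all add: mult_nonneg_nonneg)
    show ?thesis unfolding crit_def r i using X nz 3(1) by blast
  qed
qed

lemma circ:
  fixes n :: nat and e :: real and u :: complex
  assumes n: "n \<ge> 2" and e: "0 < e" "e \<le> 1 / (real n * 2^(n+1))" and u: "cmod u = e"
  shows "crit (u ^ n + u + cnj u) (if n mod 4 = 3 then cnj u else u)"
proof -
  define v where "v = u / complex_of_real e"
  have uv: "u = complex_of_real e * v" using e by (simp add: v_def)
  have v: "norm v = 1" using u e by (simp add: v_def norm_divide)
  define \<epsilon> where "\<epsilon> = e^(n-1)"
  have pos: "real n * 2^(n+1) > 0" using n by simp
  have "(1::real) \<le> 2^(n+1)" by (rule one_le_power) simp
  then have "1 * 1 \<le> real n * 2^(n+1)" using n by (intro mult_mono) auto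
  then have "1 / (real n * 2^(n+1)) \<le> 1" by simp
  then have e1: "e \<le> 1" using e by linarith
  have "\<epsilon> \<le> e^1" unfolding \<epsilon>_def using e e1 n by (intro power_decreasing) auto
  then have "\<epsilon> * (real n * 2^(n+1)) \<le> e * (real n * 2^(n+1))" using pos by (intro mult_right_mono) auto
  also have "\<dots> \<le> 1" using e pos by (simp add: le_divide_eq mult.commute)
  finally have \<epsilon>b: "\<epsilon> * (real n * 2^(n+1)) \<le> 1" .
  have \<epsilon>p: "0 < \<epsilon>" unfolding \<epsilon>_def using e by simp
  have \<epsilon>b': "\<epsilon> * real (n * 2^(n+1)) \<le> 1" using \<epsilon>b by simp
  have k: "crit (complex_of_real (2 * Re v) + complex_of_real \<epsilon> * v^n) (if n mod 4 = 3 then cnj v else v)"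
    using key_v[OF n v \<epsilon>p \<epsilon>b'] unfolding crit_def by simp
  have "n = Suc (n - 1)" using n by simp
  then have en: "e^n = e * \<epsilon>" unfolding \<epsilon>_def by (metis power_Suc)
  have fu: "u ^ n + u + cnj u = complex_of_real e * (complex_of_real (2 * Re v) + complex_of_real \<epsilon> * v^n)"
  proof -
    have c1: "complex_of_real e ^ n = complex_of_real e * complex_of_real \<epsilon>"
      by (metis en of_real_mult of_real_power)
    have c2: "v + cnj v = complex_of_real (2 * Re v)" by (rule complex_add_cnj)
    have "u ^ n + u + cnj u = complex_of_real e ^ n * v^n + complex_of_real e * (v + cnj v)"
      unfolding uv by (simp add: power_mult_distrib algebra_simps)
    also have "\<dots> = complex_of_real e * (complex_of_real (2 * Re v) + complex_of_real \<epsilon> * v^n)"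
      unfolding c1 c2 by (simp add: algebra_simps)
    finally show ?thesis .
  qed
  have gu: "(if n mod 4 = 3 then cnj u else u) = complex_of_real e * (if n mod 4 = 3 then cnj v else v)"
    unfolding uv by simp
  show ?thesis unfolding fu gu using crit_scale[OF k e(1) e(1)] .
qed


lemma cnj_circlepath: "cnj \<circ> circlepath 0 e = reversepath (circlepath 0 e)"
proof
  fix t
  have "2 * complex_of_real pi * \<i> * complex_of_real (1 - t) = 2 * complex_of_real pi * \<i> - 2 * complex_of_real pi * \<i> * complex_of_real t"
    by (simp add: algebra_simps)
  then have "exp (2 * complex_of_real pi * \<i> * complex_of_real (1 - t)) = exp (- (2 * complex_of_real pi * \<i> * complex_of_real t))"
    by (simp add: exp_diff exp_minus field_simps)
  then show "(cnj \<circ> circlepath 0 e) t = reversepath (circlepath 0 e) t"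
    by (simp add: circlepath reversepath_def exp_cnj)
qed

theorem mainTheorem8:
  fixes n :: nat
  assumes "n \<ge> 2"
  defines "f \<equiv> (\<lambda>u::complex. u ^ n + u + cnj u)"
  shows "isolated_root f 0 \<and>
         sm f 0 = (if even n then 1 else if n mod 4 = 3 then -1 else 1)"
proof -
  define E :: real where "E = 1 / (real n * 2^(n+1))"
  have E0: "E > 0" using assms by (simp add: E_def)
  define g where "g = (\<lambda>u::complex. if n mod 4 = 3 then cnj u else u)"
  have cr: "crit (f u) (g u)" if "0 < e" "e \<le> E" "cmod u = e" for u e
    using circ[OF assms(1), of e u] that unfolding f_def g_def E_def by simp
  have fnz: "f u \<noteq> 0" if "0 < e" "e \<le> E" "cmod u = e" for u e
    using crit_nz[OF cr[OF that]] .
  have iso: "isolated_root f 0"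
    unfolding isolated_root_def
  proof
    show "f 0 = 0" using assms by (simp add: f_def)
    show "\<exists>e>0. \<forall>u. 0 < cmod (u - 0) \<and> cmod (u - 0) < e \<longrightarrow> f u \<noteq> 0"
    proof (intro exI[of _ E] conjI allI impI)
      fix u assume "0 < cmod (u - 0) \<and> cmod (u - 0) < E"
      then show "f u \<noteq> 0" using fnz[of "cmod u" u] by simp
    qed (rule E0)
  qed
  define \<sigma> :: int where "\<sigma> = (if even n then 1 else if n mod 4 = 3 then -1 else 1)"
  have deg: "circle_degree f 0 e = of_int \<sigma>" if e: "0 < e" "e \<le> E" for e
  proof -
    define \<gamma> where "\<gamma> = circlepath 0 e"
    have pim: "path_image \<gamma> = sphere 0 e" using e by (simp add: \<gamma>_def)
    have onc: "cmod (\<gamma> t) = e" if "t \<in> {0..1}" for t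
      using pim that by (auto simp: path_image_def)
    define h where "h = (\<lambda>u. f u / complex_of_real (cmod (f u)))"
    have hc: "continuous_on (sphere 0 e) h"
      unfolding h_def f_def using fnz[OF e] unfolding f_def
      by (intro continuous_intros) auto
    have pathP: "path (h \<circ> \<gamma>)"
      unfolding path_def
      by (rule continuous_on_compose) (use hc pim in \<open>auto simp: \<gamma>_def path_image_def path_def[symmetric]\<close>)
    have gc: "continuous_on UNIV g"
      by (cases "n mod 4 = 3") (simp_all add: g_def continuous_on_id)
    have pathQ: "path (g \<circ> \<gamma>)"
      unfolding path_def
      by (rule continuous_on_compose) (auto simp: \<gamma>_def path_def[symmetric] intro: continuous_on_subset[OF gc])
    have hom: "homotopic_loops (-{0}) (h \<circ> \<gamma>) (g \<circ> \<gamma>)"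
    proof (rule homotopic_loops_linear[OF pathP pathQ])
      show "pathfinish (h \<circ> \<gamma>) = pathstart (h \<circ> \<gamma>)" "pathfinish (g \<circ> \<gamma>) = pathstart (g \<circ> \<gamma>)"
        by (simp_all add: pathfinish_compose pathstart_compose \<gamma>_def)
      fix t :: real and x assume t: "t \<in> {0..1}"
      have u: "cmod (\<gamma> t) = e" using onc[OF t] .
      have fz: "f (\<gamma> t) \<noteq> 0" using fnz[OF e u] .
      have "crit (complex_of_real (1 / cmod (f (\<gamma> t))) * f (\<gamma> t)) (complex_of_real 1 * g (\<gamma> t))"
        using crit_scale[OF cr[OF e u], of "1 / cmod (f (\<gamma> t))" 1] fz by simp
      then have c: "crit (h (\<gamma> t)) (g (\<gamma> t))" by (simp add: h_def divide_inverse mult.commute)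
      have gz: "g (\<gamma> t) \<noteq> 0" using u e by (auto simp: g_def)
      have "0 \<notin> closed_segment (h (\<gamma> t)) (g (\<gamma> t))"
        using crit_seg[OF gz] c unfolding crit_def by blast
      then show "closed_segment ((h \<circ> \<gamma>) t) ((g \<circ> \<gamma>) t) \<subseteq> - {0}" by auto
    qed
    have "circle_degree f 0 e = winding_number (h \<circ> \<gamma>) 0"
      by (simp add: circle_degree_def h_def \<gamma>_def)
    also have "\<dots> = winding_number (g \<circ> \<gamma>) 0" by (rule winding_number_homotopic_loops[OF hom])
    also have "\<dots> = of_int \<sigma>"
    proof (cases "n mod 4 = 3")
      case True
      then have "g \<circ> \<gamma> = reversepath \<gamma>" by (simp add: g_def \<gamma>_def cnj_circlepath)
      moreover have "winding_number (reversepath \<gamma>) 0 = - winding_number \<gamma> 0"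
        by (rule winding_number_reversepath) (use e pim in \<open>auto simp: \<gamma>_def\<close>)
      moreover have "winding_number \<gamma> 0 = 1" using e by (simp add: \<gamma>_def winding_number_circlepath_centre)
      moreover have "\<sigma> = -1" using True by (auto simp: \<sigma>_def) presburger
      ultimately show ?thesis by simp
    next
      case False
      then have "g \<circ> \<gamma> = \<gamma>" by (simp add: g_def o_def)
      moreover have "winding_number \<gamma> 0 = 1" using e by (simp add: \<gamma>_def winding_number_circlepath_centre)
      moreover have "\<sigma> = 1" using False by (simp add: \<sigma>_def)
      ultimately show ?thesis by simp
    qed
    finally show ?thesis .
  qed
  have ev: "\<forall>\<^sub>F e in at_right 0. circle_degree f 0 e = of_int \<sigma>"
    using eventually_at_right_real[OF E0] by (rule eventually_mono) (auto intro: deg)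
  have "sm f 0 = \<sigma>"
    unfolding sm_def
  proof (rule the_equality)
    show "\<forall>\<^sub>F e in at_right 0. circle_degree f 0 e = of_int \<sigma>" by (rule ev)
    fix d assume "\<forall>\<^sub>F e in at_right 0. circle_degree f 0 e = of_int d"
    with ev have "\<forall>\<^sub>F e in at_right (0::real). (of_int d :: complex) = of_int \<sigma>"
      by eventually_elim simp
    then have "(of_int d :: complex) = of_int \<sigma>" by (simp add: eventually_const_iff)
    then show "d = \<sigma>" by simp
  qed
  then show ?thesis using iso by (simp add: \<sigma>_def)
qed

end
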